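(* Let $R,LM,C,\widetilde C,Ceq,\widetilde{Ceq},\sim,\simeq$ be as below. (1) If conditions (1.2), (2b), (2c), (2d) and (4a) hold, then $\sim$ is an equivalence relation on $C$. (2) If in addition conditions (1.3), (3b), (3c), (3d), (4b) and (4c) hold, then $\simeq$ is an equivalence relation on $\widetilde C$. The conditions (for all well-formed data) are: (1.2) $(\Gamma,T\rhd)\Rightarrow(\Gamma\rhd)$; (1.3) $(\Gamma\vdash r:R)\Rightarrow(\Gamma,R\rhd)$; (2b) $(\Gamma,T\rhd)\Rightarrow(\Gamma\vdash T=T)$; (2c) $(\Gamma\vdash T=T')\Rightarrow(\Gamma\vdash T'=T)$; (2d) $(\Gamma\vdash T=T')\wedge(\Gamma\vdash T'=T'')\Rightarrow(\Gamma\vdash T=T'')$; (3b) $(\Gamma\vdash o:T)\Rightarrow(\Gamma\vdash o=o:T)$; (3c) $(\Gamma\vdash o=o':T)\Rightarrow(\Gamma\vdash o'=o:T)$; (3d) $(\Gamma\vdash o=o':T)\wedge(\Gamma\vdash o'=o'':T)\Rightarrow(\Gamma\vdash o=o'':T)$; (4a) $(\Gamma_1\vdash T=T')\wedge(\Gamma_1,T,\Gamma_2\vdash S=S')\Rightarrow(\Gamma_1,T',\Gamma_2\vdash S=S')$; (4b) $(\Gamma_1\vdash T=T')\wedge(\Gamma_1,T,\Gamma_2\vdash o=o':S)\Rightarrow(\Gamma_1,T',\Gamma_2\vdash o=o':S)$; (4c) $(\Gamma\vdash S=S')\wedge(\Gamma\vdash o=o':S)\Rightarrow(\Gamma\vdash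 o=o':S')$.
   Context: $[n]=\{1,\dots,n\}$; $R$ is a monad on Sets and $LM$ a left $R$-module with values in Sets. $C\subset\coprod_n\prod_{j=0}^{n-1}LM([j])$, $\widetilde C\subset\coprod_n(\prod_{j=0}^nLM([j]))\times R([n])$, $Ceq\subset\coprod_n(\prod_{j=0}^{n-1}LM([j]))\times LM([n])^2$, $\widetilde{Ceq}\subset\coprod_n(\prod_{j=0}^nLM([j]))\times R([n])^2$ are subsets. Contexts are sequences $\Gamma=(T_1,\dots,T_n)$, $T_j\in LM([j-1])$, $l(\Gamma)=n$, $ft$ drops the last entry; commas denote concatenation. $(\Gamma\rhd)$: $\Gamma\in C$; $(\Gamma\vdash t:T)$: $(\Gamma,T,t)\in\widetilde C$; $(\Gamma\vdash S=S')$: $(\Gamma,S,S')\in Ceq$; $(\Gamma\vdash o=o':S)$: $(\Gamma,S,o,o')\in\widetilde{Ceq}$. $\sim$ on $C$: $(T_1,\dots,T_n)\sim(T'_1,\dots,T'_n)$ iff $n=0$, or $ft$'s are $\sim$-related and $(T_1,\dots,T_{n-1}\vdash T_n=T'_n)$ (recursive; different lengths never related). $\simeq$ on $\widetilde C$: $(\Gamma\vdash o:S)\simeq(\Gamma'\vdash o':S')$ iff $(\Gamma,S)\sim(\Gamma',S')$ and $(\Gamma\vdash o=o':S)$. *)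

theory Defs
  imports Main
begin

text \<open>The family of sets LM([j]) is modelled as LM :: nat => 'a set (LM j = LM([j])),
  R([n]) as R :: nat => 'r set. A context (T_1,...,T_n) is a list; it is well formed
  if T_j lies in LM([j-1]), i.e. the i-th list entry (0-based) lies in LM i.
  Judgements:  C :: contexts;  Ct holds triples (Gamma, T, t);
  Ceq holds triples (Gamma, S, S');  Ceqt holds quadruples (Gamma, S, o, o').\<close>

definition wf_ctx :: "(nat \<Rightarrow> 'a set) \<Rightarrow> 'a list \<Rightarrow> bool" where
  "wf_ctx LM \<Gamma> \<longleftrightarrow> (\<forall>i<length \<Gamma>. \<Gamma> ! i \<in> LM i)"

definition sys_data ::
  "(nat \<Rightarrow> 'a set) \<Rightarrow> (nat \<Rightarrow> 'r set) \<Rightarrow> 'a list set \<Rightarrow> ('a list \<times> 'a \<times> 'r) set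
   \<Rightarrow> ('a list \<times> 'a \<times> 'a) set \<Rightarrow> ('a list \<times> 'a \<times> 'r \<times> 'r) set \<Rightarrow> bool" where
  "sys_data LM R C Ct Ceq Ceqt \<longleftrightarrow>
     C \<subseteq> {\<Gamma>. wf_ctx LM \<Gamma>} \<and>
     Ct \<subseteq> {(\<Gamma>, T, t). wf_ctx LM \<Gamma> \<and> T \<in> LM (length \<Gamma>) \<and> t \<in> R (length \<Gamma>)} \<and>
     Ceq \<subseteq> {(\<Gamma>, S, S'). wf_ctx LM \<Gamma> \<and> S \<in> LM (length \<Gamma>) \<and> S' \<in> LM (length \<Gamma>)} \<and>
     Ceqt \<subseteq> {(\<Gamma>, S, o1, o2). wf_ctx LM \<Gamma> \<and> S \<in> LM (length \<Gamma>)
                  \<and> o1 \<in> R (length \<Gamma>) \<and> o2 \<in> R (length \<Gamma>)}"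

inductive ctx_sim :: "('a list \<times> 'a \<times> 'a) set \<Rightarrow> 'a list \<Rightarrow> 'a list \<Rightarrow> bool"
  for Ceq where
  nil: "ctx_sim Ceq [] []"
| snoc: "ctx_sim Ceq \<Gamma> \<Gamma>' \<Longrightarrow> (\<Gamma>, T, T') \<in> Ceq \<Longrightarrow> ctx_sim Ceq (\<Gamma> @ [T]) (\<Gamma>' @ [T'])"

definition sim_rel :: "'a list set \<Rightarrow> ('a list \<times> 'a \<times> 'a) set \<Rightarrow> ('a list \<times> 'a list) set" where
  "sim_rel C Ceq = {(\<Gamma>, \<Gamma>'). \<Gamma> \<in> C \<and> \<Gamma>' \<in> C \<and> ctx_sim Ceq \<Gamma> \<Gamma>'}"

definition simeq_rel ::
  "('a list \<times> 'a \<times> 'r) set \<Rightarrow> ('a list \<times> 'a \<times> 'a) set \<Rightarrow> ('a list \<times> 'a \<times> 'r \<times> 'r) set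
   \<Rightarrow> (('a list \<times> 'a \<times> 'r) \<times> ('a list \<times> 'a \<times> 'r)) set" where
  "simeq_rel Ct Ceq Ceqt = {((\<Gamma>, S, o1), (\<Gamma>', S', o2)).
      (\<Gamma>, S, o1) \<in> Ct \<and> (\<Gamma>', S', o2) \<in> Ct \<and>
      ctx_sim Ceq (\<Gamma> @ [S]) (\<Gamma>' @ [S']) \<and> (\<Gamma>, S, o1, o2) \<in> Ceqt}"

definition cond_1_2 where
  "cond_1_2 LM C \<longleftrightarrow> (\<forall>\<Gamma> T. wf_ctx LM (\<Gamma> @ [T]) \<longrightarrow> \<Gamma> @ [T] \<in> C \<longrightarrow> \<Gamma> \<in> C)"

definition cond_1_3 where
  "cond_1_3 LM R C Ct \<longleftrightarrow> (\<forall>\<Gamma> T r. wf_ctx LM (\<Gamma> @ [T]) \<and> r \<in> R (length \<Gamma>) \<longrightarrow>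
      (\<Gamma>, T, r) \<in> Ct \<longrightarrow> \<Gamma> @ [T] \<in> C)"

definition cond_2b where
  "cond_2b LM C Ceq \<longleftrightarrow> (\<forall>\<Gamma> T. wf_ctx LM (\<Gamma> @ [T]) \<longrightarrow> \<Gamma> @ [T] \<in> C \<longrightarrow> (\<Gamma>, T, T) \<in> Ceq)"

definition cond_2c where
  "cond_2c LM Ceq \<longleftrightarrow> (\<forall>\<Gamma> T T'. wf_ctx LM \<Gamma> \<and> T \<in> LM (length \<Gamma>) \<and> T' \<in> LM (length \<Gamma>) \<longrightarrow>
      (\<Gamma>, T, T') \<in> Ceq \<longrightarrow> (\<Gamma>, T', T) \<in> Ceq)"

definition cond_2d where
  "cond_2d LM Ceq \<longleftrightarrow> (\<forall>\<Gamma> T T' T''. wf_ctx LM \<Gamma> \<and> T \<in> LM (length \<Gamma>) \<and> T' \<in> LM (length \<Gamma>)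
      \<and> T'' \<in> LM (length \<Gamma>) \<longrightarrow>
      (\<Gamma>, T, T') \<in> Ceq \<and> (\<Gamma>, T', T'') \<in> Ceq \<longrightarrow> (\<Gamma>, T, T'') \<in> Ceq)"

definition cond_3b where
  "cond_3b LM R Ct Ceqt \<longleftrightarrow> (\<forall>\<Gamma> T o1. wf_ctx LM (\<Gamma> @ [T]) \<and> o1 \<in> R (length \<Gamma>) \<longrightarrow>
      (\<Gamma>, T, o1) \<in> Ct \<longrightarrow> (\<Gamma>, T, o1, o1) \<in> Ceqt)"

definition cond_3c where
  "cond_3c LM R Ceqt \<longleftrightarrow> (\<forall>\<Gamma> T o1 o2. wf_ctx LM (\<Gamma> @ [T]) \<and> o1 \<in> R (length \<Gamma>)
      \<and> o2 \<in> R (length \<Gamma>) \<longrightarrow>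
      (\<Gamma>, T, o1, o2) \<in> Ceqt \<longrightarrow> (\<Gamma>, T, o2, o1) \<in> Ceqt)"

definition cond_3d where
  "cond_3d LM R Ceqt \<longleftrightarrow> (\<forall>\<Gamma> T o1 o2 o3. wf_ctx LM (\<Gamma> @ [T]) \<and> o1 \<in> R (length \<Gamma>)
      \<and> o2 \<in> R (length \<Gamma>) \<and> o3 \<in> R (length \<Gamma>) \<longrightarrow>
      (\<Gamma>, T, o1, o2) \<in> Ceqt \<and> (\<Gamma>, T, o2, o3) \<in> Ceqt \<longrightarrow> (\<Gamma>, T, o1, o3) \<in> Ceqt)"

definition cond_4a where
  "cond_4a LM Ceq \<longleftrightarrow> (\<forall>\<Gamma>1 T T' \<Gamma>2 S S'.
      wf_ctx LM (\<Gamma>1 @ [T] @ \<Gamma>2) \<and> wf_ctx LM (\<Gamma>1 @ [T'] @ \<Gamma>2)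
      \<and> S \<in> LM (length \<Gamma>1 + 1 + length \<Gamma>2) \<and> S' \<in> LM (length \<Gamma>1 + 1 + length \<Gamma>2) \<longrightarrow>
      (\<Gamma>1, T, T') \<in> Ceq \<and> (\<Gamma>1 @ [T] @ \<Gamma>2, S, S') \<in> Ceq \<longrightarrow> (\<Gamma>1 @ [T'] @ \<Gamma>2, S, S') \<in> Ceq)"

definition cond_4b where
  "cond_4b LM R Ceq Ceqt \<longleftrightarrow> (\<forall>\<Gamma>1 T T' \<Gamma>2 S o1 o2.
      wf_ctx LM (\<Gamma>1 @ [T] @ \<Gamma>2) \<and> wf_ctx LM (\<Gamma>1 @ [T'] @ \<Gamma>2)
      \<and> S \<in> LM (length \<Gamma>1 + 1 + length \<Gamma>2)
      \<and> o1 \<in> R (length \<Gamma>1 + 1 + length \<Gamma>2) \<and> o2 \<in> R (length \<Gamma>1 + 1 + length \<Gamma>2) \<longrightarrow>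
      (\<Gamma>1, T, T') \<in> Ceq \<and> (\<Gamma>1 @ [T] @ \<Gamma>2, S, o1, o2) \<in> Ceqt
        \<longrightarrow> (\<Gamma>1 @ [T'] @ \<Gamma>2, S, o1, o2) \<in> Ceqt)"

definition cond_4c where
  "cond_4c LM R Ceq Ceqt \<longleftrightarrow> (\<forall>\<Gamma> S S' o1 o2.
      wf_ctx LM \<Gamma> \<and> S \<in> LM (length \<Gamma>) \<and> S' \<in> LM (length \<Gamma>)
      \<and> o1 \<in> R (length \<Gamma>) \<and> o2 \<in> R (length \<Gamma>) \<longrightarrow>
      (\<Gamma>, S, S') \<in> Ceq \<and> (\<Gamma>, S, o1, o2) \<in> Ceqt \<longrightarrow> (\<Gamma>, S', o1, o2) \<in> Ceqt)"

end

theory Submission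
  imports Defs
begin

lemma wf_swap:
  assumes "wf_ctx LM (A @ [T] @ B)" "T' \<in> LM (length A)"
  shows "wf_ctx LM (A @ [T'] @ B)"
  unfolding wf_ctx_def
proof (intro allI impI)
  fix i assume i: "i < length (A @ [T'] @ B)"
  show "(A @ [T'] @ B) ! i \<in> LM i"
  proof (cases "i = length A")
    case True then show ?thesis using assms(2) by (simp add: nth_append)
  next
    case False
    then have "(A @ [T'] @ B) ! i = (A @ [T] @ B) ! i" by (simp add: nth_append)
    with assms(1) i show ?thesis unfolding wf_ctx_def by simp
  qed
qed

lemma sim_len: "ctx_sim Ceq G G' \<Longrightarrow> length G = length G'"
  by (induction rule: ctx_sim.induct) auto

lemma sim_snoc_inv:
  assumes "ctx_sim Ceq (G @ [S]) (G' @ [S'])"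
  shows "ctx_sim Ceq G G' \<and> (G, S, S') \<in> Ceq"
  using assms by (cases rule: ctx_sim.cases) auto

lemma transp_eq:
  assumes data: "sys_data LM R C Ct Ceq Ceqt" and c4a: "cond_4a LM Ceq"
  shows "ctx_sim Ceq G G' \<Longrightarrow> (G @ D, S, S') \<in> Ceq \<Longrightarrow> (G' @ D, S, S') \<in> Ceq"
proof (induction arbitrary: D rule: ctx_sim.induct)
  case nil
  then show ?case by simp
next
  case (snoc G G' T T')
  have m: "(G @ [T] @ D, S, S') \<in> Ceq" using snoc.prems by simp
  from m data have w: "wf_ctx LM (G @ [T] @ D)" "S \<in> LM (length G + 1 + length D)"
    "S' \<in> LM (length G + 1 + length D)"
    unfolding sys_data_def by auto
  from snoc.hyps(2) data have "T' \<in> LM (length G)" unfolding sys_data_def by auto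
  then have w2: "wf_ctx LM (G @ [T'] @ D)" by (rule wf_swap[OF w(1)])
  have imp: "wf_ctx LM (G @ [T] @ D) \<and> wf_ctx LM (G @ [T'] @ D)
      \<and> S \<in> LM (length G + 1 + length D) \<and> S' \<in> LM (length G + 1 + length D) \<longrightarrow>
      (G, T, T') \<in> Ceq \<and> (G @ [T] @ D, S, S') \<in> Ceq \<longrightarrow> (G @ [T'] @ D, S, S') \<in> Ceq"
    using c4a unfolding cond_4a_def by (elim allE)
  have "(G @ [T'] @ D, S, S') \<in> Ceq" using imp w w2 snoc.hyps(2) m by blast
  then have "(G @ ([T'] @ D), S, S') \<in> Ceq" by simp
  from snoc.IH[OF this] show ?case by simp
qed

lemma transp_eqt:
  assumes data: "sys_data LM R C Ct Ceq Ceqt" and c4b: "cond_4b LM R Ceq Ceqt"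
  shows "ctx_sim Ceq G G' \<Longrightarrow> (G @ D, S, o1, o2) \<in> Ceqt \<Longrightarrow> (G' @ D, S, o1, o2) \<in> Ceqt"
proof (induction arbitrary: D rule: ctx_sim.induct)
  case nil
  then show ?case by simp
next
  case (snoc G G' T T')
  have m: "(G @ [T] @ D, S, o1, o2) \<in> Ceqt" using snoc.prems by simp
  from m data have w: "wf_ctx LM (G @ [T] @ D)" "S \<in> LM (length G + 1 + length D)"
    "o1 \<in> R (length G + 1 + length D)" "o2 \<in> R (length G + 1 + length D)"
    unfolding sys_data_def by auto
  from snoc.hyps(2) data have "T' \<in> LM (length G)" unfolding sys_data_def by auto
  then have w2: "wf_ctx LM (G @ [T'] @ D)" by (rule wf_swap[OF w(1)])
  have imp: "wf_ctx LM (G @ [T] @ D) \<and> wf_ctx LM (G @ [T'] @ D)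
      \<and> S \<in> LM (length G + 1 + length D)
      \<and> o1 \<in> R (length G + 1 + length D) \<and> o2 \<in> R (length G + 1 + length D) \<longrightarrow>
      (G, T, T') \<in> Ceq \<and> (G @ [T] @ D, S, o1, o2) \<in> Ceqt
        \<longrightarrow> (G @ [T'] @ D, S, o1, o2) \<in> Ceqt"
    using c4b unfolding cond_4b_def by (elim allE)
  have "(G @ [T'] @ D, S, o1, o2) \<in> Ceqt" using imp w w2 snoc.hyps(2) m by blast
  then have "(G @ ([T'] @ D), S, o1, o2) \<in> Ceqt" by simp
  from snoc.IH[OF this] show ?case by simp
qed

lemma eq_sym:
  assumes data: "sys_data LM R C Ct Ceq Ceqt" and c2c: "cond_2c LM Ceq"
  shows "(G, T, T') \<in> Ceq \<Longrightarrow> (G, T', T) \<in> Ceq"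
  using data c2c unfolding sys_data_def cond_2c_def by blast

lemma sim_sym:
  assumes data: "sys_data LM R C Ct Ceq Ceqt" and c2c: "cond_2c LM Ceq" and c4a: "cond_4a LM Ceq"
  shows "ctx_sim Ceq G G' \<Longrightarrow> ctx_sim Ceq G' G"
proof (induction rule: ctx_sim.induct)
  case nil
  then show ?case by (rule ctx_sim.nil)
next
  case (snoc G G' T T')
  have "(G, T', T) \<in> Ceq" using eq_sym[OF data c2c snoc.hyps(2)] .
  then have "(G' @ [], T', T) \<in> Ceq" using transp_eq[OF data c4a snoc.hyps(1), of "[]"] by simp
  then show ?case using ctx_sim.snoc[OF snoc.IH] by simp
qed

lemma sim_trans:
  assumes data: "sys_data LM R C Ct Ceq Ceqt" and c2c: "cond_2c LM Ceq" and c4a: "cond_4a LM Ceq"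
    and c2d: "cond_2d LM Ceq"
  shows "ctx_sim Ceq G G' \<Longrightarrow> ctx_sim Ceq G' G'' \<Longrightarrow> ctx_sim Ceq G G''"
proof (induction arbitrary: G'' rule: ctx_sim.induct)
  case nil
  then show ?case by simp
next
  case (snoc G G' T T')
  from snoc.prems show ?case
  proof (cases rule: ctx_sim.cases)
    case nil
    then show ?thesis by simp
  next
    case (snoc H H'' U U'')
    have l: "length G' = length H" using snoc(1) by (metis append1_eq_conv)
    have "G' = H" "T' = U" using snoc(1) by auto
    with snoc have h1: "ctx_sim Ceq G' H''" "(G', T', U'') \<in> Ceq" by auto
    have "ctx_sim Ceq G' G" using sim_sym[OF data c2c c4a] \<open>ctx_sim Ceq G G'\<close> by blast
    from transp_eq[OF data c4a this, of "[]"] h1(2) have e: "(G, T', U'') \<in> Ceq" by simp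
    from e data have "wf_ctx LM G" "T' \<in> LM (length G)" "U'' \<in> LM (length G)"
      unfolding sys_data_def by auto
    moreover from \<open>(G, T, T') \<in> Ceq\<close> data have "T \<in> LM (length G)" unfolding sys_data_def by auto
    ultimately have "(G, T, U'') \<in> Ceq" using c2d e \<open>(G, T, T') \<in> Ceq\<close>
      unfolding cond_2d_def by blast
    then show ?thesis using ctx_sim.snoc[OF snoc.IH[OF h1(1)]] snoc h1 by auto
  qed
qed

theorem lemma6p4:
  fixes LM :: "nat \<Rightarrow> 'a set" and R :: "nat \<Rightarrow> 'r set"
    and C :: "'a list set" and Ct :: "('a list \<times> 'a \<times> 'r) set"
    and Ceq :: "('a list \<times> 'a \<times> 'a) set" and Ceqt :: "('a list \<times> 'a \<times> 'r \<times> 'r) set"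
  assumes data: "sys_data LM R C Ct Ceq Ceqt"
    and c12: "cond_1_2 LM C" and c2b: "cond_2b LM C Ceq" and c2c: "cond_2c LM Ceq"
    and c2d: "cond_2d LM Ceq" and c4a: "cond_4a LM Ceq"
  shows "equiv C (sim_rel C Ceq) \<and>
         (cond_1_3 LM R C Ct \<and> cond_3b LM R Ct Ceqt \<and> cond_3c LM R Ceqt \<and> cond_3d LM R Ceqt
          \<and> cond_4b LM R Ceq Ceqt \<and> cond_4c LM R Ceq Ceqt
          \<longrightarrow> equiv Ct (simeq_rel Ct Ceq Ceqt))"
proof -
  have refl: "ctx_sim Ceq G G" if "G \<in> C" for G
    using that
  proof (induction G rule: rev_induct)
    case Nil then show ?case by (simp add: ctx_sim.nil)
  next
    case (snoc T G)
    have w: "wf_ctx LM (G @ [T])" using snoc.prems data unfolding sys_data_def by auto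
    have "G \<in> C" using c12 w snoc.prems unfolding cond_1_2_def by (elim allE impE)
    moreover have "(G, T, T) \<in> Ceq" using c2b w snoc.prems unfolding cond_2b_def by (elim allE impE)
    ultimately show ?case using ctx_sim.snoc[OF snoc.IH] by simp
  qed
  have sym: "\<And>G G'. ctx_sim Ceq G G' \<Longrightarrow> ctx_sim Ceq G' G" using sim_sym[OF data c2c c4a] .
  have trn: "\<And>G G' G''. ctx_sim Ceq G G' \<Longrightarrow> ctx_sim Ceq G' G'' \<Longrightarrow> ctx_sim Ceq G G''"
    using sim_trans[OF data c2c c4a c2d] by blast
  have P1: "equiv C (sim_rel C Ceq)"
  proof (rule equivI)
    show "sim_rel C Ceq \<subseteq> C \<times> C" unfolding sim_rel_def by auto
    show "refl_on C (sim_rel C Ceq)"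
      unfolding refl_on_def sim_rel_def using refl by auto
    show "sym (sim_rel C Ceq)"
      by (rule symI) (auto simp: sim_rel_def intro: sym)
    show "trans (sim_rel C Ceq)"
      by (rule transI) (auto simp: sim_rel_def intro: trn)
  qed
  have P2: "equiv Ct (simeq_rel Ct Ceq Ceqt)"
    if c13: "cond_1_3 LM R C Ct" and c3b: "cond_3b LM R Ct Ceqt" and c3c: "cond_3c LM R Ceqt"
      and c3d: "cond_3d LM R Ceqt" and c4b: "cond_4b LM R Ceq Ceqt" and c4c: "cond_4c LM R Ceq Ceqt"
  proof -
    have ctw: "wf_ctx LM (G @ [S]) \<and> o1 \<in> R (length G)" if "(G, S, o1) \<in> Ct" for G S o1
    proof -
      from that data have "wf_ctx LM G" "S \<in> LM (length G)" "o1 \<in> R (length G)"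
        unfolding sys_data_def by auto
      then show ?thesis unfolding wf_ctx_def by (auto simp: nth_append less_Suc_eq)
    qed
    have eqtw: "wf_ctx LM (G @ [S]) \<and> o1 \<in> R (length G) \<and> o2 \<in> R (length G)"
      if "(G, S, o1, o2) \<in> Ceqt" for G S o1 o2
    proof -
      from that data have "wf_ctx LM G" "S \<in> LM (length G)" "o1 \<in> R (length G)" "o2 \<in> R (length G)"
        unfolding sys_data_def by auto
      then show ?thesis unfolding wf_ctx_def by (auto simp: nth_append less_Suc_eq)
    qed
    have eqw: "wf_ctx LM G \<and> S \<in> LM (length G) \<and> S' \<in> LM (length G)" if "(G, S, S') \<in> Ceq" for G S S'
      using that data unfolding sys_data_def by auto
    have r: "((G, S, o1), (G, S, o1)) \<in> simeq_rel Ct Ceq Ceqt" if m: "(G, S, o1) \<in> Ct" for G S o1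
    proof -
      have "G @ [S] \<in> C" using c13 ctw[OF m] m unfolding cond_1_3_def by blast
      moreover have "(G, S, o1, o1) \<in> Ceqt" using c3b ctw[OF m] m unfolding cond_3b_def by blast
      ultimately show ?thesis using m refl unfolding simeq_rel_def by blast
    qed
    have s: "((G', S', o2), (G, S, o1)) \<in> simeq_rel Ct Ceq Ceqt"
      if m: "((G, S, o1), (G', S', o2)) \<in> simeq_rel Ct Ceq Ceqt" for G S o1 G' S' o2
    proof -
      from m have ct: "(G, S, o1) \<in> Ct" "(G', S', o2) \<in> Ct" and cs: "ctx_sim Ceq (G @ [S]) (G' @ [S'])"
        and e: "(G, S, o1, o2) \<in> Ceqt" unfolding simeq_rel_def by auto
      from sim_snoc_inv[OF cs] have cs0: "ctx_sim Ceq G G'" and ss: "(G, S, S') \<in> Ceq" by auto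
      have e2: "(G, S, o2, o1) \<in> Ceqt" using c3c eqtw[OF e] e unfolding cond_3c_def by blast
      have e3: "(G, S', o2, o1) \<in> Ceqt" using c4c eqtw[OF e] eqw[OF ss] e2 ss
        unfolding cond_4c_def by blast
      have "(G' @ [], S', o2, o1) \<in> Ceqt" using transp_eqt[OF data c4b cs0, of "[]"] e3 by simp
      then show ?thesis using ct sym[OF cs] unfolding simeq_rel_def by auto
    qed
    have t: "((G, S, o1), (G'', S'', o3)) \<in> simeq_rel Ct Ceq Ceqt"
      if m1: "((G, S, o1), (G', S', o2)) \<in> simeq_rel Ct Ceq Ceqt"
        and m2: "((G', S', o2), (G'', S'', o3)) \<in> simeq_rel Ct Ceq Ceqt" for G S o1 G' S' o2 G'' S'' o3
    proof -
      from m1 have ct: "(G, S, o1) \<in> Ct" and cs: "ctx_sim Ceq (G @ [S]) (G' @ [S'])"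
        and e: "(G, S, o1, o2) \<in> Ceqt" unfolding simeq_rel_def by auto
      from m2 have ct2: "(G'', S'', o3) \<in> Ct" and cs2: "ctx_sim Ceq (G' @ [S']) (G'' @ [S''])"
        and e': "(G', S', o2, o3) \<in> Ceqt" unfolding simeq_rel_def by auto
      from sim_snoc_inv[OF cs] have cs0: "ctx_sim Ceq G G'" and ss: "(G, S, S') \<in> Ceq" by auto
      have "(G @ [], S', o2, o3) \<in> Ceqt" using transp_eqt[OF data c4b sym[OF cs0], of "[]"] e' by simp
      then have e2: "(G, S', o2, o3) \<in> Ceqt" by simp
      have ss': "(G, S', S) \<in> Ceq" using eq_sym[OF data c2c ss] .
      have e3: "(G, S, o2, o3) \<in> Ceqt" using c4c eqtw[OF e2] eqw[OF ss'] e2 ss'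
        unfolding cond_4c_def by blast
      have "(G, S, o1, o3) \<in> Ceqt" using c3d eqtw[OF e] eqtw[OF e3] e e3
        unfolding cond_3d_def by blast
      then show ?thesis using ct ct2 trn[OF cs cs2] unfolding simeq_rel_def by auto
    qed
    show ?thesis
    proof (rule equivI)
      show "simeq_rel Ct Ceq Ceqt \<subseteq> Ct \<times> Ct" unfolding simeq_rel_def by auto
      show "refl_on Ct (simeq_rel Ct Ceq Ceqt)"
      proof (rule refl_onI)
        fix x assume "x \<in> Ct" then show "(x, x) \<in> simeq_rel Ct Ceq Ceqt"
          using r by (cases x) auto
      qed
      show "sym (simeq_rel Ct Ceq Ceqt)"
      proof (rule symI)
        fix x y assume "(x, y) \<in> simeq_rel Ct Ceq Ceqt"
        then show "(y, x) \<in> simeq_rel Ct Ceq Ceqt" using s by (cases x, cases y) auto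
      qed
      show "trans (simeq_rel Ct Ceq Ceqt)"
      proof (rule transI)
        fix x y z assume "(x, y) \<in> simeq_rel Ct Ceq Ceqt" "(y, z) \<in> simeq_rel Ct Ceq Ceqt"
        then show "(x, z) \<in> simeq_rel Ct Ceq Ceqt" using t
          by (cases x, cases y, cases z) (metis prod_cases3)
      qed
    qed
  qed
  show ?thesis using P1 P2 by blast
qed

end
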